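(* In the Waterfilling bucketing construction described in the context, let $A$ be the joint strategy matrix produced for a set of analysts and let $A'$ be the joint strategy matrix produced after additionally adding one analyst with weight $s_i>0$ and strategy matrix $A_i$ every column of which has $L_1$ norm $1$. Then $\|A'\|_1=\|A\|_1+s_i$.
   Context: Matrices have $n$ columns. For a matrix $M$, $\|M\|_1$ is the maximum over columns of the column's $L_1$ norm. Fix a norm $\|\cdot\|$ on row vectors. Each analyst $l$ has a weight $s_l>0$ and a strategy matrix $A_l$ whose every column has $L_1$ norm $1$. Bucketing: maintain a set $B$ of unit vectors $e$ with weights $f_B(e)>0$, initially empty; processing analyst $l$ means, for each nonzero row $v$ of $s_lA_l$, setting $e=v/\|v\|$ and, if $e\in B$, increasing $f_B(e)$ by $\|v\|$, otherwise adding $e$ to $B$ with $f_B(e)=\|v\|$. The joint strategy matrix has one row $f_B(e)e$ for each $e\in B$. *)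

theory Defs
  imports "HOL-Analysis.Analysis"
begin

type_synonym 'n rowvec = "real ^ 'n"
type_synonym 'n matrix = "'n rowvec list"

definition is_norm :: "('n::finite rowvec \<Rightarrow> real) \<Rightarrow> bool" where
  "is_norm N \<longleftrightarrow>
     (\<forall>x. 0 \<le> N x) \<and> (\<forall>x. N x = 0 \<longleftrightarrow> x = 0) \<and>
     (\<forall>c x. N (c *\<^sub>R x) = \<bar>c\<bar> * N x) \<and> (\<forall>x y. N (x + y) \<le> N x + N y)"

definition col_l1 :: "'n::finite matrix \<Rightarrow> 'n \<Rightarrow> real" where
  "col_l1 M j = sum_list (map (\<lambda>r. \<bar>r $ j\<bar>) M)"

definition mat_norm1 :: "'n::finite matrix \<Rightarrow> real" where
  "mat_norm1 M = Max (range (col_l1 M))"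

text \<open>Bucket state: the set B of unit vectors together with the weight function f_B.\<close>
type_synonym 'n bucket = "'n rowvec set \<times> ('n rowvec \<Rightarrow> real)"

definition empty_bucket :: "'n::finite bucket" where
  "empty_bucket = ({}, (\<lambda>_. 0))"

definition process_row :: "('n::finite rowvec \<Rightarrow> real) \<Rightarrow> 'n bucket \<Rightarrow> 'n rowvec \<Rightarrow> 'n bucket" where
  "process_row N st v =
     (if v = 0 then st
      else (let (B, f) = st; e = (1 / N v) *\<^sub>R v in
            if e \<in> B then (B, f(e := f e + N v)) else (insert e B, f(e := N v))))"

text \<open>An analyst is a pair (s, A) of a weight and a strategy matrix; processing it means
processing each row of s A in turn.\<close>
definition process_analyst :: "('n::finite rowvec \<Rightarrow> real) \<Rightarrow> real \<times> 'n matrix \<Rightarrow> 'n bucket \<Rightarrow> 'n bucket" where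
  "process_analyst N a st = fold (\<lambda>v st'. process_row N st' v) (map (\<lambda>r. fst a *\<^sub>R r) (snd a)) st"

definition bucketing :: "('n::finite rowvec \<Rightarrow> real) \<Rightarrow> (real \<times> 'n matrix) list \<Rightarrow> 'n bucket" where
  "bucketing N analysts = fold (process_analyst N) analysts empty_bucket"

definition joint_matrix :: "('n::finite rowvec \<Rightarrow> real) \<Rightarrow> (real \<times> 'n matrix) list \<Rightarrow> 'n matrix" where
  "joint_matrix N analysts =
     (let (B, f) = bucketing N analysts;
          xs = (SOME xs. distinct xs \<and> set xs = B)
      in map (\<lambda>e. f e *\<^sub>R e) xs)"

definition valid_analyst :: "real \<times> 'n::finite matrix \<Rightarrow> bool" where
  "valid_analyst a \<longleftrightarrow> fst a > 0 \<and> (\<forall>j. col_l1 (snd a) j = 1)"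

end

theory Submission
  imports Defs
begin

definition phi :: "'n::finite bucket \<Rightarrow> 'n \<Rightarrow> real" where
  "phi st j = (\<Sum>e\<in>fst st. snd st e * \<bar>e $ j\<bar>)"

definition inv_b :: "'n::finite bucket \<Rightarrow> bool" where
  "inv_b st \<longleftrightarrow> finite (fst st) \<and> (\<forall>e\<in>fst st. snd st e \<ge> 0)"

lemma row_step:
  assumes N: "is_norm N" and I: "inv_b st"
  shows "inv_b (process_row N st v) \<and> phi (process_row N st v) j = phi st j + \<bar>v $ j\<bar>"
proof (cases "v = 0")
  case True
  then show ?thesis using I by (simp add: process_row_def)
next
  case False
  obtain B f where st: "st = (B, f)" by fastforce
  have Npos: "N v > 0" using N False unfolding is_norm_def
    by (metis less_eq_real_def)
  define e where "e = (1 / N v) *\<^sub>R v"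
  have key: "N v * \<bar>e $ j\<bar> = \<bar>v $ j\<bar>"
    using Npos by (simp add: e_def abs_mult)
  have fin: "finite B" and nn: "\<forall>x\<in>B. f x \<ge> 0" using I st by (auto simp: inv_b_def)
  show ?thesis
  proof (cases "e \<in> B")
    case True
    have pr: "process_row N st v = (B, f(e := f e + N v))"
      using False True st by (simp add: process_row_def e_def Let_def)
    have "phi (B, f(e := f e + N v)) j = (\<Sum>x\<in>B. f x * \<bar>x $ j\<bar>) + N v * \<bar>e $ j\<bar>"
    proof -
      have "(\<Sum>x\<in>B. (f(e := f e + N v)) x * \<bar>x $ j\<bar>)
          = (\<Sum>x\<in>B. f x * \<bar>x $ j\<bar> + (if x = e then N v * \<bar>e $ j\<bar> else 0))"
        by (rule sum.cong) (auto simp: algebra_simps)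
      also have "\<dots> = (\<Sum>x\<in>B. f x * \<bar>x $ j\<bar>) + N v * \<bar>e $ j\<bar>"
        using fin True by (simp add: sum.distrib)
      finally show ?thesis by (simp add: phi_def)
    qed
    then show ?thesis using pr nn fin Npos True key st
      by (auto simp: inv_b_def phi_def)
  next
    case nB: False
    have pr: "process_row N st v = (insert e B, f(e := N v))"
      using False nB st by (simp add: process_row_def e_def Let_def)
    have "phi (insert e B, f(e := N v)) j = N v * \<bar>e $ j\<bar> + (\<Sum>x\<in>B. f x * \<bar>x $ j\<bar>)"
    proof -
      have "(\<Sum>x\<in>insert e B. (f(e := N v)) x * \<bar>x $ j\<bar>)
          = N v * \<bar>e $ j\<bar> + (\<Sum>x\<in>B. (f(e := N v)) x * \<bar>x $ j\<bar>)"
        using fin nB by simp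
      also have "(\<Sum>x\<in>B. (f(e := N v)) x * \<bar>x $ j\<bar>) = (\<Sum>x\<in>B. f x * \<bar>x $ j\<bar>)"
        by (rule sum.cong) (use nB in auto)
      finally show ?thesis by (simp add: phi_def)
    qed
    then show ?thesis using pr nn fin Npos key st
      by (auto simp: inv_b_def phi_def)
  qed
qed

lemma rows_step:
  assumes N: "is_norm N"
  shows "inv_b st \<Longrightarrow> inv_b (fold (\<lambda>v st'. process_row N st' v) vs st) \<and>
    phi (fold (\<lambda>v st'. process_row N st' v) vs st) j = phi st j + sum_list (map (\<lambda>v. \<bar>v $ j\<bar>) vs)"
proof (induction vs arbitrary: st)
  case Nil
  then show ?case by simp
next
  case (Cons v vs)
  from row_step[OF N Cons.prems, of v j] Cons.IH[of "process_row N st v"]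
  show ?case by simp
qed

lemma analyst_step:
  assumes N: "is_norm N" and I: "inv_b st"
  shows "inv_b (process_analyst N a st) \<and>
    phi (process_analyst N a st) j = phi st j + \<bar>fst a\<bar> * col_l1 (snd a) j"
proof -
  have "sum_list (map (\<lambda>v. \<bar>v $ j\<bar>) (map (\<lambda>r. fst a *\<^sub>R r) (snd a)))
      = \<bar>fst a\<bar> * col_l1 (snd a) j"
    unfolding col_l1_def
  proof (induction "snd a" arbitrary: a)
    case Nil
    then show ?case by (metis list.simps(8) mult_zero_right sum_list.Nil)
  next
    case (Cons r rs)
    have "sum_list (map (\<lambda>v. \<bar>v $ j\<bar>) (map (\<lambda>r. fst a *\<^sub>R r) rs))
      = \<bar>fst a\<bar> * sum_list (map (\<lambda>r. \<bar>r $ j\<bar>) rs)"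
      using Cons.hyps(1)[of "(fst a, rs)"] by simp
    then show ?case using Cons.hyps(2)[symmetric] by (simp add: abs_mult algebra_simps)
  qed
  then show ?thesis using rows_step[OF N I] unfolding process_analyst_def by simp
qed

lemma analysts_step:
  assumes N: "is_norm N"
  shows "inv_b st \<Longrightarrow> \<forall>a\<in>set as. valid_analyst a \<Longrightarrow> inv_b (fold (process_analyst N) as st) \<and>
    phi (fold (process_analyst N) as st) j = phi st j + sum_list (map fst as)"
proof (induction as arbitrary: st)
  case Nil
  then show ?case by simp
next
  case (Cons a as)
  have "valid_analyst a" using Cons.prems by simp
  then have "\<bar>fst a\<bar> * col_l1 (snd a) j = fst a" by (simp add: valid_analyst_def)
  with analyst_step[OF N Cons.prems(1), of a j] Cons.IH[of "process_analyst N a st"] Cons.prems(2)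
  show ?case by simp
qed

lemma bucketing_phi:
  assumes N: "is_norm N" and V: "\<forall>a\<in>set as. valid_analyst a"
  shows "inv_b (bucketing N as) \<and> phi (bucketing N as) j = sum_list (map fst as)"
proof -
  have "inv_b (empty_bucket :: 'a bucket)" by (simp add: inv_b_def empty_bucket_def)
  from analysts_step[OF N this V, of j] show ?thesis
    by (simp add: bucketing_def phi_def empty_bucket_def)
qed

lemma col_joint:
  assumes N: "is_norm N" and V: "\<forall>a\<in>set as. valid_analyst a"
  shows "col_l1 (joint_matrix N as) j = sum_list (map fst as)"
proof -
  obtain B f where bf: "bucketing N as = (B, f)" by fastforce
  have I: "inv_b (B, f)" and P: "phi (B, f) j = sum_list (map fst as)"
    using bucketing_phi[OF N V, of j] bf by auto
  have fin: "finite B" and nn: "\<forall>e\<in>B. f e \<ge> 0" using I by (auto simp: inv_b_def)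
  define xs where "xs = (SOME xs. distinct xs \<and> set xs = B)"
  have xs: "distinct xs \<and> set xs = B"
    unfolding xs_def by (rule someI_ex) (use finite_distinct_list[OF fin] in auto)
  have jm: "joint_matrix N as = map (\<lambda>e. f e *\<^sub>R e) xs"
    by (simp add: joint_matrix_def bf xs_def)
  have "col_l1 (joint_matrix N as) j = sum_list (map (\<lambda>e. \<bar>f e * e $ j\<bar>) xs)"
    by (simp add: jm col_l1_def o_def)
  also have "\<dots> = (\<Sum>e\<in>B. \<bar>f e * e $ j\<bar>)"
    using xs by (metis sum_list_distinct_conv_sum_set)
  also have "\<dots> = (\<Sum>e\<in>B. f e * \<bar>e $ j\<bar>)"
    by (rule sum.cong) (use nn in \<open>auto simp: abs_mult\<close>)
  also have "\<dots> = sum_list (map fst as)" using P by (simp add: phi_def)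
  finally show ?thesis .
qed

lemma norm_joint:
  assumes N: "is_norm N" and V: "\<forall>a\<in>set as. valid_analyst a"
  shows "mat_norm1 (joint_matrix N as) = sum_list (map fst as)"
proof -
  have "range (col_l1 (joint_matrix N as)) = {sum_list (map fst as)}"
    using col_joint[OF N V] by auto
  then show ?thesis by (simp add: mat_norm1_def)
qed

theorem mainTheorem4:
  fixes N :: "'n::finite rowvec \<Rightarrow> real"
    and analysts :: "(real \<times> 'n matrix) list"
    and s_i :: real and A_i :: "'n matrix"
  assumes "is_norm N"
    and "\<forall>a \<in> set analysts. valid_analyst a"
    and "s_i > 0"
    and "\<forall>j. col_l1 A_i j = 1"
  shows "mat_norm1 (joint_matrix N (analysts @ [(s_i, A_i)]))
         = mat_norm1 (joint_matrix N analysts) + s_i"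
proof -
  have "\<forall>a \<in> set (analysts @ [(s_i, A_i)]). valid_analyst a"
    using assms by (auto simp: valid_analyst_def)
  from norm_joint[OF assms(1) this] norm_joint[OF assms(1) assms(2)]
  show ?thesis by simp
qed

end
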